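(* Let $G$, $Z=\langle z\rangle$, $g_1,\dots,g_{2r}$, $S$ and $\Gamma=\mathrm{Cay}(G,S)$ be as in the context. Then $\Gamma$ is a $2$-arc-transitive cover of the $2r$-dimensional hypercube $\Sigma=\mathrm{Cay}(G/Z,\{Zg_1,\dots,Zg_{2r}\})$: the normal quotient $\Gamma_Z$ of $\Gamma$ with respect to the right-multiplication action of $Z$ is isomorphic to $\Sigma$, and $\Gamma$ and $\Gamma_Z$ both have valency $2r$.
   Context: Let $r\ge1$ and $G$ an extraspecial $2$-group of order $2^{2r+1}$ (i.e. $|Z(G)|=2$, $G/Z(G)\cong\mathbb{Z}_2^{2r}$), $Z=Z(G)=\langle z\rangle$ identified with $\mathbb{F}_2$, and $G/Z$ equipped with the quadratic form $Q(Zx)=x^2$ and bilinear form $B(Zx,Zy)=[x,y]$. Assume $\{Zg_1,\dots,Zg_{2r}\}$ is a symmetric basis of $G/Z$ ($Q(Zg_i)=0$, $B(Zg_i,Zg_j)=1$ for $i\ne j$); $S=\{g_1,\dots,g_{2r}\}$; $\mathrm{Cay}(H,T)$ has vertex set $H$ and edges $\{x,tx\}$. For $N\le\mathrm{Aut}(\Gamma)$ the normal quotient $\Gamma_N$ has the $N$-orbits as vertices, two orbits adjacent iff some edge of $\Gamma$ joins them; $\Gamma$ is a cover of $\Gamma_N$ if the valencies coincide. $\Gamma$ is $2$-arc-transitive if $\mathrm{Aut}(\Gamma)$ is transitive on triples $(u,v,w)$ with $u\sim v\sim w$, $u\ne w$. *)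

theory Defs
  imports "HOL-Algebra.Algebra"
begin

definition group_center :: "('a, 'b) monoid_scheme \<Rightarrow> 'a set" where
  "group_center G = {x \<in> carrier G. \<forall>y \<in> carrier G. x \<otimes>\<^bsub>G\<^esub> y = y \<otimes>\<^bsub>G\<^esub> x}"

definition commutator :: "('a, 'b) monoid_scheme \<Rightarrow> 'a \<Rightarrow> 'a \<Rightarrow> 'a" where
  "commutator G x y = inv\<^bsub>G\<^esub> x \<otimes>\<^bsub>G\<^esub> inv\<^bsub>G\<^esub> y \<otimes>\<^bsub>G\<^esub> x \<otimes>\<^bsub>G\<^esub> y"

text \<open>Undirected graphs: a vertex set together with a set of edges, each edge being
  a set {u,v} of vertices (a loop would be a singleton).\<close>
type_synonym 'v graph = "'v set \<times> 'v set set"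

definition verts :: "'v graph \<Rightarrow> 'v set" where "verts \<Gamma> = fst \<Gamma>"
definition edges :: "'v graph \<Rightarrow> 'v set set" where "edges \<Gamma> = snd \<Gamma>"

definition cayley_graph :: "('a, 'b) monoid_scheme \<Rightarrow> 'a set \<Rightarrow> 'a graph" where
  "cayley_graph H T = (carrier H, {{x, t \<otimes>\<^bsub>H\<^esub> x} | x t. x \<in> carrier H \<and> t \<in> T})"

definition neighbours :: "'v graph \<Rightarrow> 'v \<Rightarrow> 'v set" where
  "neighbours \<Gamma> v = {u \<in> verts \<Gamma>. {v, u} \<in> edges \<Gamma>}"

definition regular_of_valency :: "'v graph \<Rightarrow> nat \<Rightarrow> bool" where
  "regular_of_valency \<Gamma> k \<longleftrightarrow> (\<forall>v \<in> verts \<Gamma>. card (neighbours \<Gamma> v) = k)"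

definition graph_aut :: "'v graph \<Rightarrow> ('v \<Rightarrow> 'v) set" where
  "graph_aut \<Gamma> = {f. bij_betw f (verts \<Gamma>) (verts \<Gamma>) \<and>
     (\<forall>u \<in> verts \<Gamma>. \<forall>v \<in> verts \<Gamma>. {u, v} \<in> edges \<Gamma> \<longleftrightarrow> {f u, f v} \<in> edges \<Gamma>)}"

definition graph_iso :: "'v graph \<Rightarrow> 'w graph \<Rightarrow> bool" where
  "graph_iso \<Gamma> \<Delta> \<longleftrightarrow> (\<exists>f. bij_betw f (verts \<Gamma>) (verts \<Delta>) \<and>
     (\<forall>u \<in> verts \<Gamma>. \<forall>v \<in> verts \<Gamma>. {u, v} \<in> edges \<Gamma> \<longleftrightarrow> {f u, f v} \<in> edges \<Delta>))"

definition two_arcs :: "'v graph \<Rightarrow> ('v \<times> 'v \<times> 'v) set" where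
  "two_arcs \<Gamma> = {(u, v, w). u \<in> verts \<Gamma> \<and> v \<in> verts \<Gamma> \<and> w \<in> verts \<Gamma> \<and>
      {u, v} \<in> edges \<Gamma> \<and> {v, w} \<in> edges \<Gamma> \<and> u \<noteq> w}"

definition two_arc_transitive :: "'v graph \<Rightarrow> bool" where
  "two_arc_transitive \<Gamma> \<longleftrightarrow>
     (\<forall>(u, v, w) \<in> two_arcs \<Gamma>. \<forall>(u', v', w') \<in> two_arcs \<Gamma>.
        \<exists>f \<in> graph_aut \<Gamma>. f u = u' \<and> f v = v' \<and> f w = w')"

definition orbits :: "('v \<Rightarrow> 'v) set \<Rightarrow> 'v set \<Rightarrow> 'v set set" where
  "orbits N V = {(\<lambda>n. n x) ` N | x. x \<in> V}"

definition normal_quotient :: "'v graph \<Rightarrow> ('v \<Rightarrow> 'v) set \<Rightarrow> 'v set graph" where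
  "normal_quotient \<Gamma> N = (orbits N (verts \<Gamma>),
     {{B, C} | B C. B \<in> orbits N (verts \<Gamma>) \<and> C \<in> orbits N (verts \<Gamma>) \<and>
        (\<exists>u \<in> B. \<exists>v \<in> C. {u, v} \<in> edges \<Gamma>)})"

definition right_mult_perms :: "('a, 'b) monoid_scheme \<Rightarrow> 'a set \<Rightarrow> ('a \<Rightarrow> 'a) set" where
  "right_mult_perms G K = {(\<lambda>x. x \<otimes>\<^bsub>G\<^esub> n) | n. n \<in> K}"

end

theory Submission
  imports Defs
begin
definition sd :: "'x set \<Rightarrow> 'x set \<Rightarrow> 'x set" where
  "sd A B = (A - B) \<union> (B - A)"

definition cnt :: "nat set \<Rightarrow> nat set \<Rightarrow> nat" where
  "cnt K L = (\<Sum>i\<in>K. card {j\<in>L. j < i})"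

definition mulD :: "nat set \<times> bool \<Rightarrow> nat set \<times> bool \<Rightarrow> nat set \<times> bool" where
  "mulD p q = (sd (fst p) (fst q), snd p \<noteq> (snd q \<noteq> odd (cnt (fst p) (fst q))))"

locale sbasis = group G for G (structure) +
  fixes z :: 'a and h :: "nat \<Rightarrow> 'a" and n :: nat
  assumes z_carr: "z \<in> carrier G"
  and z_cent: "\<And>x. x \<in> carrier G \<Longrightarrow> z \<otimes> x = x \<otimes> z"
  and zz: "z \<otimes> z = \<one>"
  and h_carr: "\<And>i. i < n \<Longrightarrow> h i \<in> carrier G"
  and h_sq: "\<And>i. i < n \<Longrightarrow> h i \<otimes> h i = \<one>"
  and h_comm: "\<And>i j. i < n \<Longrightarrow> j < n \<Longrightarrow> i \<noteq> j \<Longrightarrow> h i \<otimes> h j = z \<otimes> (h j \<otimes> h i)"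
begin

definition wp :: "nat list \<Rightarrow> 'a" where
  "wp xs = foldr (\<lambda>i a. h i \<otimes> a) xs \<one>"

definition Psi :: "nat set \<Rightarrow> 'a" where
  "Psi K = wp (sorted_list_of_set K)"

definition zp :: "bool \<Rightarrow> 'a" where
  "zp b = (if b then z else \<one>)"

definition Phi :: "nat set \<times> bool \<Rightarrow> 'a" where
  "Phi p = zp (snd p) \<otimes> Psi (fst p)"

lemma wp_carr: "set xs \<subseteq> {..<n} \<Longrightarrow> wp xs \<in> carrier G"
  by (induction xs) (auto simp: wp_def h_carr)

lemma Psi_carr: "K \<subseteq> {..<n} \<Longrightarrow> Psi K \<in> carrier G"
  unfolding Psi_def using finite_subset[of K "{..<n}"] by (intro wp_carr) auto

lemma zp_carr[simp]: "zp b \<in> carrier G"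
  by (simp add: zp_def z_carr)

lemma Phi_carr: "fst p \<subseteq> {..<n} \<Longrightarrow> Phi p \<in> carrier G"
  by (simp add: Phi_def Psi_carr)

lemma Psi_empty[simp]: "Psi {} = \<one>"
  by (simp add: Psi_def wp_def)

lemma Psi_insert_min:
  assumes "finite K" "\<And>k. k \<in> K \<Longrightarrow> m < k"
  shows "Psi (insert m K) = h m \<otimes> Psi K"
proof -
  have mK: "m \<notin> K" using assms(2) by blast
  have "Min (insert m K) = m"
    using assms by (intro Min_eqI) (auto intro: less_imp_le)
  then have "sorted_list_of_set (insert m K) = m # sorted_list_of_set K"
    using sorted_list_of_set_nonempty[of "insert m K"] assms(1) mK by simp
  then show ?thesis by (simp add: Psi_def wp_def)
qed

lemma Psi_single: "Psi {m} = h m \<otimes> \<one>"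
  using Psi_insert_min[of "{}" m] by simp

lemma zpow_cent: "x \<in> carrier G \<Longrightarrow> z [^] (c::nat) \<otimes> x = x \<otimes> z [^] c"
proof (induction c)
  case 0 then show ?case by simp
next
  case (Suc c)
  have "z [^] Suc c \<otimes> x = z [^] c \<otimes> (z \<otimes> x)"
    using Suc z_carr by (simp add: m_assoc)
  also have "\<dots> = z [^] c \<otimes> (x \<otimes> z)" by (simp add: z_cent[OF Suc.prems])
  also have "\<dots> = (z [^] c \<otimes> x) \<otimes> z" using Suc.prems z_carr by (simp add: m_assoc)
  also have "\<dots> = (x \<otimes> z [^] c) \<otimes> z" using Suc by simp
  also have "\<dots> = x \<otimes> (z [^] c \<otimes> z)" using Suc z_carr by (simp add: m_assoc)
  also have "\<dots> = x \<otimes> z [^] Suc c" using Suc z_carr by simp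
  finally show ?case .
qed

lemma zpow_zp: "z [^] (c::nat) = zp (odd c)"
proof (induction c)
  case 0 then show ?case by (simp add: zp_def)
next
  case (Suc c) then show ?case using z_carr zz by (auto simp: zp_def)
qed

lemma zp_xor: "zp (a \<noteq> b) = zp a \<otimes> zp b"
  using z_carr zz by (auto simp: zp_def)

lemma zp_cent: "x \<in> carrier G \<Longrightarrow> zp b \<otimes> x = x \<otimes> zp b"
  using z_cent by (auto simp: zp_def)

lemma h_Psi:
  assumes "K \<subseteq> {..<n}" "m < n"
  shows "h m \<otimes> Psi K = z [^] card {k\<in>K. k < m} \<otimes> Psi (sd {m} K)"
  using assms
proof (induction "card K" arbitrary: K rule: less_induct)
  case less
  have fK: "finite K" using less.prems finite_subset by blast
  show ?case
  proof (cases "K = {}")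
    case True
    then show ?thesis using Psi_single less.prems h_carr by (simp add: sd_def)
  next
    case False
    define k0 where "k0 = Min K"
    define K' where "K' = K - {k0}"
    have k0K: "k0 \<in> K" using False fK k0_def by simp
    have KK': "K = insert k0 K'" using k0K K'_def by blast
    have gt: "\<And>k. k \<in> K' \<Longrightarrow> k0 < k" using fK K'_def k0_def
      by (metis DiffD1 DiffD2 Min_le insertCI order_neq_le_trans)
    have fK': "finite K'" using fK K'_def by simp
    have PK: "Psi K = h k0 \<otimes> Psi K'" using Psi_insert_min[OF fK' gt] KK' by simp
    have K'sub: "K' \<subseteq> {..<n}" using less.prems K'_def by auto
    have k0n: "k0 < n" using k0K less.prems by auto
    have cK': "card K' < card K" using fK k0K K'_def by (metis card_Diff1_less)
    show ?thesis
    proof (cases "m < k0")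
      case True
      have allK: "\<forall>k\<in>K. m < k" using True gt KK' by (metis insert_iff order.strict_trans)
      have e1: "card {k\<in>K. k < m} = 0" using allK by auto
      have e2: "sd {m} K = insert m K" using allK by (auto simp: sd_def)
      have "Psi (insert m K) = h m \<otimes> Psi K"
        using Psi_insert_min[OF fK] True gt KK' by (metis insert_iff order.strict_trans)
      then show ?thesis unfolding e1 e2 using Psi_carr less.prems h_carr by simp
    next
      case False
      show ?thesis
      proof (cases "m = k0")
        case True
        have e1: "card {k\<in>K. k < m} = 0" using True gt KK' by (auto dest: gt)
        have e2: "sd {m} K = K'" using True gt KK' by (auto simp: sd_def)
        have "h m \<otimes> Psi K = (h m \<otimes> h m) \<otimes> Psi K'"
          using PK True h_carr Psi_carr K'sub less.prems by (simp add: m_assoc)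
        then show ?thesis unfolding e1 e2 using h_sq less.prems Psi_carr K'sub by simp
      next
        case False
        then have lt: "k0 < m" using \<open>\<not> m < k0\<close> by simp
        define c' where "c' = card {k\<in>K'. k < m}"
        have IH: "h m \<otimes> Psi K' = z [^] c' \<otimes> Psi (sd {m} K')"
          using less.hyps[OF cK' K'sub less.prems(2)] c'_def by simp
        have e1: "{k\<in>K. k < m} = insert k0 {k\<in>K'. k < m}" using lt KK' by auto
        have k0n': "k0 \<notin> {k\<in>K'. k < m}" using gt by auto
        have c: "card {k\<in>K. k < m} = Suc c'" using e1 k0n' fK' c'_def by simp
        have e2: "sd {m} K = insert k0 (sd {m} K')" using lt gt KK' k0K gt by (auto simp: sd_def)
        have gt2: "\<And>k. k \<in> sd {m} K' \<Longrightarrow> k0 < k" using lt gt by (auto simp: sd_def)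
        have fsd: "finite (sd {m} K')" using fK' by (simp add: sd_def)
        have P2: "Psi (sd {m} K) = h k0 \<otimes> Psi (sd {m} K')"
          using e2 Psi_insert_min[OF fsd gt2] by simp
        have sdsub: "sd {m} K' \<subseteq> {..<n}" using K'sub less.prems by (auto simp: sd_def)
        have hm: "h m \<in> carrier G" using less.prems h_carr by simp
        have hk: "h k0 \<in> carrier G" using k0n h_carr by simp
        have PS: "Psi (sd {m} K') \<in> carrier G" using Psi_carr sdsub by simp
        have PK': "Psi K' \<in> carrier G" using Psi_carr K'sub by simp
        have "h m \<otimes> Psi K = (h m \<otimes> h k0) \<otimes> Psi K'" using PK hm hk PK' by (simp add: m_assoc)
        also have "\<dots> = (z \<otimes> (h k0 \<otimes> h m)) \<otimes> Psi K'"
          using h_comm[OF less.prems(2) k0n] lt by simp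
        also have "\<dots> = z \<otimes> (h k0 \<otimes> (h m \<otimes> Psi K'))"
          using hm hk PK' z_carr by (simp add: m_assoc)
        also have "\<dots> = z \<otimes> (h k0 \<otimes> (z [^] c' \<otimes> Psi (sd {m} K')))" using IH by simp
        also have "\<dots> = z \<otimes> ((h k0 \<otimes> z [^] c') \<otimes> Psi (sd {m} K'))"
          using hk PS z_carr by (simp add: m_assoc)
        also have "\<dots> = z \<otimes> ((z [^] c' \<otimes> h k0) \<otimes> Psi (sd {m} K'))"
          using zpow_cent[OF hk] by simp
        also have "\<dots> = (z \<otimes> z [^] c') \<otimes> (h k0 \<otimes> Psi (sd {m} K'))"
          using hk PS z_carr by (simp add: m_assoc)
        also have "\<dots> = (z [^] c' \<otimes> z) \<otimes> Psi (sd {m} K)"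
          using zpow_cent[OF z_carr] P2 by simp
        also have "\<dots> = z [^] card {k\<in>K. k < m} \<otimes> Psi (sd {m} K)" using c z_carr by simp
        finally show ?thesis .
      qed
    qed
  qed
qed

lemma sd_sub: "K \<subseteq> {..<n} \<Longrightarrow> L \<subseteq> {..<n} \<Longrightarrow> sd K L \<subseteq> {..<n}"
  by (auto simp: sd_def)

lemma Psi_mult:
  assumes "K \<subseteq> {..<n}" "L \<subseteq> {..<n}"
  shows "Psi K \<otimes> Psi L = z [^] cnt K L \<otimes> Psi (sd K L)"
  using assms
proof (induction "card K" arbitrary: K rule: less_induct)
  case less
  have fK: "finite K" using less.prems finite_subset by blast
  have PL: "Psi L \<in> carrier G" using Psi_carr less.prems by simp
  show ?case
  proof (cases "K = {}")
    case True
    then show ?thesis using PL by (simp add: sd_def cnt_def)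
  next
    case False
    define m where "m = Min K"
    define K' where "K' = K - {m}"
    have mK: "m \<in> K" using False fK m_def by simp
    have KK': "K = insert m K'" using mK K'_def by blast
    have mK': "m \<notin> K'" using K'_def by simp
    have gt: "\<And>k. k \<in> K' \<Longrightarrow> m < k" using fK K'_def m_def
      by (metis DiffD1 DiffD2 Min_le insertCI order_neq_le_trans)
    have fK': "finite K'" using fK K'_def by simp
    have PK: "Psi K = h m \<otimes> Psi K'" using Psi_insert_min[OF fK' gt] KK' by simp
    have K'sub: "K' \<subseteq> {..<n}" using less.prems K'_def by auto
    have mn: "m < n" using mK less.prems by auto
    have cK': "card K' < card K" using fK mK K'_def by (metis card_Diff1_less)
    have IH: "Psi K' \<otimes> Psi L = z [^] cnt K' L \<otimes> Psi (sd K' L)"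
      using less.hyps[OF cK' K'sub less.prems(2)] .
    have sdsub: "sd K' L \<subseteq> {..<n}" using K'sub less.prems by (auto simp: sd_def)
    have hm: "h m \<in> carrier G" using mn h_carr by simp
    have PK': "Psi K' \<in> carrier G" using Psi_carr K'sub by simp
    have PS: "Psi (sd K' L) \<in> carrier G" using Psi_carr sdsub by simp
    have h2: "h m \<otimes> Psi (sd K' L) = z [^] card {k\<in>sd K' L. k < m} \<otimes> Psi (sd {m} (sd K' L))"
      using h_Psi[OF sdsub mn] .
    have e1: "{k\<in>sd K' L. k < m} = {j\<in>L. j < m}" using gt by (auto simp: sd_def dest: gt)
    have e2: "sd {m} (sd K' L) = sd K L" using KK' mK' by (auto simp: sd_def)
    have e3: "cnt K L = card {j\<in>L. j < m} + cnt K' L"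
      unfolding cnt_def using KK' mK' fK' by simp
    have "Psi K \<otimes> Psi L = h m \<otimes> (Psi K' \<otimes> Psi L)" using PK hm PK' PL by (simp add: m_assoc)
    also have "\<dots> = h m \<otimes> (z [^] cnt K' L \<otimes> Psi (sd K' L))" using IH by simp
    also have "\<dots> = (h m \<otimes> z [^] cnt K' L) \<otimes> Psi (sd K' L)" using hm PS z_carr by (simp add: m_assoc)
    also have "\<dots> = (z [^] cnt K' L \<otimes> h m) \<otimes> Psi (sd K' L)" using zpow_cent[OF hm] by simp
    also have "\<dots> = z [^] cnt K' L \<otimes> (h m \<otimes> Psi (sd K' L))" using hm PS z_carr by (simp add: m_assoc)
    also have "\<dots> = z [^] cnt K' L \<otimes> (z [^] card {j\<in>L. j < m} \<otimes> Psi (sd K L))"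
      using h2 e1 e2 by simp
    also have "\<dots> = (z [^] cnt K' L \<otimes> z [^] card {j\<in>L. j < m}) \<otimes> Psi (sd K L)"
      using z_carr Psi_carr[OF sd_sub[OF less.prems]] by (simp add: m_assoc)
    also have "\<dots> = z [^] cnt K L \<otimes> Psi (sd K L)"
      using e3 z_carr by (simp add: nat_pow_mult add.commute)
    finally show ?thesis .
  qed
qed


lemma Phi_mult:
  assumes "fst p \<subseteq> {..<n}" "fst q \<subseteq> {..<n}"
  shows "Phi p \<otimes> Phi q = Phi (mulD p q)"
proof -
  obtain K a L b where pq: "p = (K, a)" "q = (L, b)" by (cases p, cases q) auto
  have K: "K \<subseteq> {..<n}" and L: "L \<subseteq> {..<n}" using assms pq by auto
  have PK: "Psi K \<in> carrier G" and PL: "Psi L \<in> carrier G" using Psi_carr K L by auto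
  have "Phi p \<otimes> Phi q = zp a \<otimes> Psi K \<otimes> (zp b \<otimes> Psi L)" using pq by (simp add: Phi_def)
  also have "\<dots> = zp a \<otimes> (Psi K \<otimes> zp b) \<otimes> Psi L" using PK PL by (simp add: m_assoc)
  also have "\<dots> = zp a \<otimes> (zp b \<otimes> Psi K) \<otimes> Psi L" using zp_cent[OF PK] by simp
  also have "\<dots> = zp a \<otimes> zp b \<otimes> (Psi K \<otimes> Psi L)" using PK PL by (simp add: m_assoc)
  also have "\<dots> = zp a \<otimes> zp b \<otimes> (zp (odd (cnt K L)) \<otimes> Psi (sd K L))"
    using Psi_mult[OF K L] zpow_zp by simp
  also have "\<dots> = zp (a \<noteq> (b \<noteq> odd (cnt K L))) \<otimes> Psi (sd K L)"
  proof -
    have "zp (a \<noteq> (b \<noteq> odd (cnt K L))) = zp a \<otimes> (zp b \<otimes> zp (odd (cnt K L)))" by (simp only: zp_xor)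
    then show ?thesis using Psi_carr[OF sd_sub[OF K L]] by (simp add: m_assoc)
  qed
  also have "\<dots> = Phi (mulD p q)" using pq by (simp add: Phi_def mulD_def)
  finally show ?thesis .
qed

lemma Phi_single: "i < n \<Longrightarrow> Phi ({i}, False) = h i"
  using Psi_single h_carr by (simp add: Phi_def zp_def)

lemma Phi_z: "Phi ({}, True) = z"
  using z_carr by (simp add: Phi_def zp_def)

lemma wp_hom:
  assumes "f \<in> hom G G" "set xs \<subseteq> {..<n}" "\<And>i. i \<in> set xs \<Longrightarrow> f (h i) = h' i"
  shows "f (wp xs) = foldr (\<lambda>i a. h' i \<otimes> a) xs \<one>"
  using assms(2,3)
proof (induction xs)
  case Nil
  then show ?case using assms(1) by (simp add: wp_def hom_one)
next
  case (Cons x xs)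
  then have "f (h x \<otimes> wp xs) = f (h x) \<otimes> f (wp xs)"
    using assms(1) h_carr wp_carr by (simp add: hom_mult)
  then show ?case using Cons by (simp add: wp_def)
qed

end

lemma cay_verts[simp]: "verts (cayley_graph H T) = carrier H"
  by (simp add: cayley_graph_def verts_def)

lemma cay_edge:
  assumes "monoid H" "T \<subseteq> carrier H" "\<And>t. t \<in> T \<Longrightarrow> t \<otimes>\<^bsub>H\<^esub> t = \<one>\<^bsub>H\<^esub>"
    "u \<in> carrier H" "v \<in> carrier H"
  shows "{u, v} \<in> edges (cayley_graph H T) \<longleftrightarrow> (\<exists>t\<in>T. v = t \<otimes>\<^bsub>H\<^esub> u)"
proof
  assume "{u, v} \<in> edges (cayley_graph H T)"
  then obtain x t where xt: "{u, v} = {x, t \<otimes>\<^bsub>H\<^esub> x}" "x \<in> carrier H" "t \<in> T"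
    by (auto simp: cayley_graph_def edges_def)
  then have "(u = x \<and> v = t \<otimes>\<^bsub>H\<^esub> x) \<or> (u = t \<otimes>\<^bsub>H\<^esub> x \<and> v = x)"
    by (simp add: doubleton_eq_iff)
  then show "\<exists>t\<in>T. v = t \<otimes>\<^bsub>H\<^esub> u"
  proof
    assume "u = x \<and> v = t \<otimes>\<^bsub>H\<^esub> x" then show ?thesis using xt by blast
  next
    assume a: "u = t \<otimes>\<^bsub>H\<^esub> x \<and> v = x"
    have tc: "t \<in> carrier H" using xt assms(2) by blast
    have "t \<otimes>\<^bsub>H\<^esub> u = (t \<otimes>\<^bsub>H\<^esub> t) \<otimes>\<^bsub>H\<^esub> x"
      using a tc xt monoid.m_assoc[OF assms(1)] by simp
    also have "\<dots> = x" using assms(3)[OF xt(3)] xt monoid.l_one[OF assms(1)] by simp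
    finally show ?thesis using a xt by metis
  qed
next
  assume "\<exists>t\<in>T. v = t \<otimes>\<^bsub>H\<^esub> u"
  then show "{u, v} \<in> edges (cayley_graph H T)"
    using assms(4) by (auto simp: cayley_graph_def edges_def)
qed

lemma aut_comp:
  assumes "f \<in> graph_aut \<Gamma>" "h \<in> graph_aut \<Gamma>"
  shows "f \<circ> h \<in> graph_aut \<Gamma>"
proof -
  have bf: "bij_betw f (verts \<Gamma>) (verts \<Gamma>)" and bh: "bij_betw h (verts \<Gamma>) (verts \<Gamma>)"
    using assms by (auto simp: graph_aut_def)
  have hv: "\<And>u. u \<in> verts \<Gamma> \<Longrightarrow> h u \<in> verts \<Gamma>" using bh bij_betwE by blast
  show ?thesis unfolding graph_aut_def
  proof (intro CollectI conjI ballI)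
    show "bij_betw (f \<circ> h) (verts \<Gamma>) (verts \<Gamma>)" using bij_betw_trans[OF bh bf] .
    fix u v assume "u \<in> verts \<Gamma>" "v \<in> verts \<Gamma>"
    then show "({u, v} \<in> edges \<Gamma>) = ({(f \<circ> h) u, (f \<circ> h) v} \<in> edges \<Gamma>)"
      using assms hv by (auto simp: graph_aut_def)
  qed
qed

definition tr :: "nat \<Rightarrow> nat \<Rightarrow> nat \<Rightarrow> nat" where
  "tr a b x = (if x = a then b else if x = b then a else x)"

lemma tr_tr: "tr a b (tr a b x) = x" by (simp add: tr_def)

lemma tr_bij: "a < N \<Longrightarrow> b < N \<Longrightarrow> bij_betw (tr a b) {..<N} {..<N}"
  by (rule bij_betwI[where g="tr a b"]) (auto simp: tr_def)

lemma perm2: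
  assumes "a < (N::nat)" "b < N" "a \<noteq> b" "a' < N" "b' < N" "a' \<noteq> b'"
  shows "\<exists>\<sigma>. bij_betw \<sigma> {..<N} {..<N} \<and> \<sigma> a = a' \<and> \<sigma> b = b'"
proof -
  define b1 where "b1 = tr a a' b"
  have b1N: "b1 < N" using assms by (auto simp: b1_def tr_def)
  have b1a: "b1 \<noteq> a'" using assms by (auto simp: b1_def tr_def)
  define \<sigma> where "\<sigma> = tr b1 b' \<circ> tr a a'"
  have "bij_betw \<sigma> {..<N} {..<N}"
    unfolding \<sigma>_def using bij_betw_trans[OF tr_bij tr_bij] assms b1N by blast
  moreover have "\<sigma> a = a'" using b1a assms by (auto simp: \<sigma>_def tr_def)
  moreover have "\<sigma> b = b'"
  proof -
    have "\<sigma> b = tr b1 b' b1" unfolding \<sigma>_def b1_def by simp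
    then show ?thesis by (simp add: tr_def)
  qed
  ultimately show ?thesis by blast
qed

locale ctx = group G for G (structure) +
  fixes r :: nat and z :: 'a and g :: "nat \<Rightarrow> 'a"
  assumes r1: "r \<ge> 1"
    and finG: "finite (carrier G)"
    and cardG: "card (carrier G) = 2 ^ (2 * r + 1)"
    and cent: "group_center G = {\<one>, z}" and zn1: "z \<noteq> \<one>"
    and isoP: "G Mod (group_center G) \<cong> product_group {..<2 * r} (\<lambda>_. integer_mod_group 2)"
    and g_carr: "\<And>i. i < 2 * r \<Longrightarrow> g i \<in> carrier G"
    and indep: "\<And>I. I \<subseteq> {..<2 * r} \<Longrightarrow>
           finprod (G Mod (group_center G)) (\<lambda>i. group_center G #> g i) I
             = \<one>\<^bsub>G Mod (group_center G)\<^esub> \<Longrightarrow> I = {}"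
    and g_sq: "\<And>i. i < 2 * r \<Longrightarrow> g i \<otimes> g i = \<one>"
    and g_comm0: "\<And>i j. i < 2 * r \<Longrightarrow> j < 2 * r \<Longrightarrow> i \<noteq> j \<Longrightarrow> commutator G (g i) (g j) = z"
begin

abbreviation "Z \<equiv> {\<one>, z}"

lemma z_carr: "z \<in> carrier G"
  using cent unfolding group_center_def by blast

lemma z_cent: "x \<in> carrier G \<Longrightarrow> z \<otimes> x = x \<otimes> z"
  using cent unfolding group_center_def by blast

lemma zz: "z \<otimes> z = \<one>"
proof -
  have "z \<otimes> z \<in> group_center G"
    unfolding group_center_def
  proof (intro CollectI conjI ballI)
    show "z \<otimes> z \<in> carrier G" using z_carr by simp
    fix y assume y: "y \<in> carrier G"
    have "z \<otimes> z \<otimes> y = z \<otimes> (y \<otimes> z)" using z_carr y z_cent[OF y] by (simp add: m_assoc)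
    also have "\<dots> = (z \<otimes> y) \<otimes> z" using z_carr y by (simp add: m_assoc)
    also have "\<dots> = y \<otimes> z \<otimes> z" using z_cent[OF y] by simp
    finally show "z \<otimes> z \<otimes> y = y \<otimes> (z \<otimes> z)" using z_carr y by (simp add: m_assoc)
  qed
  then have "z \<otimes> z = \<one> \<or> z \<otimes> z = z" using cent by auto
  moreover have "z \<otimes> z \<noteq> z" using zn1 z_carr by simp
  ultimately show ?thesis by blast
qed

lemma g_inv: "i < 2 * r \<Longrightarrow> inv (g i) = g i"
  using g_sq g_carr inv_equality by blast

lemma g_comm: "i < 2 * r \<Longrightarrow> j < 2 * r \<Longrightarrow> i \<noteq> j \<Longrightarrow> g i \<otimes> g j = z \<otimes> (g j \<otimes> g i)"
proof -
  assume ij: "i < 2 * r" "j < 2 * r" "i \<noteq> j"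
  define x where "x = g i \<otimes> g j"
  have gi: "g i \<in> carrier G" and gj: "g j \<in> carrier G" using ij g_carr by auto
  have xc: "x \<in> carrier G" using gi gj x_def by simp
  have xx: "x \<otimes> x = z" using g_comm0[OF ij] unfolding commutator_def x_def
    using g_inv ij gi gj by (simp add: m_assoc)
  have "x = x \<otimes> x \<otimes> inv x" using xc by (simp add: m_assoc)
  also have "\<dots> = z \<otimes> (inv (g j) \<otimes> inv (g i))" using xx x_def gi gj by (simp add: inv_mult_group)
  finally show ?thesis using x_def g_inv ij by simp
qed

sublocale S: sbasis G z g "2 * r"
proof unfold_locales
  show "z \<in> carrier G" by (rule z_carr)
  show "\<And>x. x \<in> carrier G \<Longrightarrow> z \<otimes> x = x \<otimes> z" by (rule z_cent)
  show "z \<otimes> z = \<one>" by (rule zz)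
  show "\<And>i. i < 2 * r \<Longrightarrow> g i \<in> carrier G" by (rule g_carr)
  show "\<And>i. i < 2 * r \<Longrightarrow> g i \<otimes> g i = \<one>" by (rule g_sq)
  show "\<And>i j. i < 2 * r \<Longrightarrow> j < 2 * r \<Longrightarrow> i \<noteq> j \<Longrightarrow> g i \<otimes> g j = z \<otimes> (g j \<otimes> g i)" by (rule g_comm)
qed

lemma Zsub: "subgroup Z G"
proof (rule subgroupI)
  show "Z \<subseteq> carrier G" using z_carr by auto
  show "Z \<noteq> {}" by simp
  fix a assume "a \<in> Z" then show "inv a \<in> Z"
    using zz z_carr inv_equality by auto
next
  fix a b assume "a \<in> Z" "b \<in> Z" then show "a \<otimes> b \<in> Z"
    using zz z_carr by auto
qed

lemma Znormal: "Z \<lhd> G"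
  unfolding normal_inv_iff
proof (intro conjI Zsub ballI)
  fix x h assume x: "x \<in> carrier G" and h: "h \<in> Z"
  have "x \<otimes> h \<otimes> inv x = h \<otimes> x \<otimes> inv x"
    using h z_cent[OF x] x by auto
  also have "\<dots> = h" using h x z_carr by (auto simp: m_assoc)
  finally show "x \<otimes> h \<otimes> inv x \<in> Z" using h by simp
qed

lemma FG: "group (G Mod Z)"
  using normal.factorgroup_is_group[OF Znormal] .

lemma comm_P: "comm_group (product_group {..<2 * r} (\<lambda>_. integer_mod_group 2))"
proof (rule group.group_comm_groupI)
  show "group (product_group {..<2 * r} (\<lambda>_. integer_mod_group 2))" by simp
  fix x y assume "x \<in> carrier (product_group {..<2 * r} (\<lambda>_. integer_mod_group 2))"
    "y \<in> carrier (product_group {..<2 * r} (\<lambda>_. integer_mod_group 2))"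
  then show "x \<otimes>\<^bsub>product_group {..<2 * r} (\<lambda>_. integer_mod_group 2)\<^esub> y =
      y \<otimes>\<^bsub>product_group {..<2 * r} (\<lambda>_. integer_mod_group 2)\<^esub> x"
    by (simp add: add.commute)
qed

lemma comm_FG: "comm_group (G Mod Z)"
proof -
  have "product_group {..<2 * r} (\<lambda>_. integer_mod_group 2) \<cong> G Mod Z"
    using group.iso_sym[OF FG] isoP cent by simp
  then show ?thesis
    using comm_group.iso_imp_comm_group[OF comm_P] FG group.is_monoid by blast
qed

lemma fp: "K \<subseteq> {..<2 * r} \<Longrightarrow> finprod (G Mod Z) (\<lambda>i. Z #> g i) K = Z #> S.Psi K"
proof (induction "card K" arbitrary: K rule: less_induct)
  case less
  have fK: "finite K" using less.prems finite_subset by blast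
  show ?case
  proof (cases "K = {}")
    case True
    interpret FGc: comm_group "G Mod Z" by (rule comm_FG)
    show ?thesis using FGc.finprod_empty True
      using subgroup.rcos_const[OF Zsub is_group, of "\<one>"] by simp
  next
    case False
    define m where "m = Min K"
    define K' where "K' = K - {m}"
    have mK: "m \<in> K" using False fK m_def by simp
    have KK': "K = insert m K'" using mK K'_def by blast
    have mK': "m \<notin> K'" using K'_def by simp
    have gt: "\<And>k. k \<in> K' \<Longrightarrow> m < k" using fK K'_def m_def
      by (metis DiffD1 DiffD2 Min_le insertCI order_neq_le_trans)
    have fK': "finite K'" using fK K'_def by simp
    have PK: "S.Psi K = g m \<otimes> S.Psi K'" using S.Psi_insert_min[OF fK' gt] KK' by simp
    have K'sub: "K' \<subseteq> {..<2 * r}" using less.prems K'_def by auto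
    have mn: "m < 2 * r" using mK less.prems by auto
    have cK': "card K' < card K" using fK mK K'_def by (metis card_Diff1_less)
    have carr: "\<And>i. i < 2 * r \<Longrightarrow> Z #> g i \<in> carrier (G Mod Z)"
      using rcosetsI[of Z] z_carr g_carr by (simp add: FactGroup_def)
    have "finprod (G Mod Z) (\<lambda>i. Z #> g i) K
        = (Z #> g m) \<otimes>\<^bsub>G Mod Z\<^esub> finprod (G Mod Z) (\<lambda>i. Z #> g i) K'"
    proof -
      interpret FGc: comm_group "G Mod Z" by (rule comm_FG)
      have "(\<lambda>i. Z #> g i) \<in> K' \<rightarrow> carrier (G Mod Z)" using carr K'sub by auto
      from FGc.finprod_insert[OF fK' mK' this carr[OF mn]]
      show ?thesis unfolding KK' .
    qed
    also have "\<dots> = (Z #> g m) <#> (Z #> S.Psi K')" using less.hyps[OF cK' K'sub] by simp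
    also have "\<dots> = Z #> S.Psi K" using normal.rcos_sum[OF Znormal] PK g_carr mn S.Psi_carr K'sub by simp
    finally show ?thesis .
  qed
qed

lemma Psi_Z: "K \<subseteq> {..<2 * r} \<Longrightarrow> S.Psi K \<in> Z \<Longrightarrow> K = {}"
proof -
  assume K: "K \<subseteq> {..<2 * r}" and P: "S.Psi K \<in> Z"
  have "finprod (G Mod Z) (\<lambda>i. Z #> g i) K = Z"
    using fp[OF K] subgroup.rcos_const[OF Zsub is_group P] by simp
  then show "K = {}" using indep[OF K] cent by simp
qed

definition D :: "(nat set \<times> bool) set" where "D = Pow {..<2 * r} \<times> UNIV"

lemma mulD_D: "p \<in> D \<Longrightarrow> q \<in> D \<Longrightarrow> mulD p q \<in> D"
  by (auto simp: D_def mulD_def sd_def)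

lemma zp_sq: "S.zp b \<otimes> S.zp b = \<one>"
  using zz by (simp add: S.zp_def)

lemma zp_Z: "S.zp b \<in> Z"
  by (simp add: S.zp_def)

lemma Phi_inj: "inj_on S.Phi D"
proof (rule inj_onI)
  fix p q assume p: "p \<in> D" and q: "q \<in> D" and e: "S.Phi p = S.Phi q"
  obtain I a J b where pq: "p = (I, a)" "q = (J, b)" by (cases p, cases q) auto
  have I: "I \<subseteq> {..<2 * r}" and J: "J \<subseteq> {..<2 * r}" using p q pq by (auto simp: D_def)
  define c where "c = snd (mulD p q)"
  define d where "d = snd (mulD q q)"
  have "S.Phi p \<otimes> S.Phi q = S.Phi (mulD p q)" using S.Phi_mult I J pq by simp
  also have "\<dots> = S.zp c \<otimes> S.Psi (sd I J)" using pq c_def by (simp add: S.Phi_def mulD_def)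
  finally have 1: "S.Phi p \<otimes> S.Phi q = S.zp c \<otimes> S.Psi (sd I J)" .
  have "S.Phi q \<otimes> S.Phi q = S.Phi (mulD q q)" using S.Phi_mult J pq by simp
  also have "\<dots> = S.zp d" using pq d_def by (simp add: S.Phi_def mulD_def sd_def)
  finally have 2: "S.Phi q \<otimes> S.Phi q = S.zp d" .
  have PS: "S.Psi (sd I J) \<in> carrier G" using S.Psi_carr S.sd_sub[OF I J] by simp
  have "S.zp c \<otimes> S.Psi (sd I J) = S.zp d" using 1 2 e by simp
  then have "S.zp c \<otimes> (S.zp c \<otimes> S.Psi (sd I J)) = S.zp c \<otimes> S.zp d" by simp
  then have "S.Psi (sd I J) = S.zp c \<otimes> S.zp d" using PS zp_sq by (simp add: m_assoc[symmetric])
  also have "\<dots> = S.zp (c \<noteq> d)" by (simp only: S.zp_xor)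
  finally have "S.Psi (sd I J) \<in> Z" using zp_Z by simp
  then have "sd I J = {}" using Psi_Z S.sd_sub[OF I J] by blast
  then have IJ: "I = J" by (auto simp: sd_def)
  have PI: "S.Psi I \<in> carrier G" using S.Psi_carr I by simp
  have "S.zp a \<otimes> S.Psi I = S.zp b \<otimes> S.Psi I" using e pq IJ by (simp add: S.Phi_def)
  then have "S.zp a = S.zp b" using PI by simp
  then have "a = b" using zn1 by (cases a; cases b) (auto simp: S.zp_def)
  then show "p = q" using pq IJ by simp
qed

lemma Phi_surj: "S.Phi ` D = carrier G"
proof (rule card_subset_eq[OF finG])
  show "S.Phi ` D \<subseteq> carrier G" using S.Phi_carr by (auto simp: D_def)
  have "card D = 2 ^ (2 * r) * 2" by (simp add: D_def card_cartesian_product card_Pow)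
  then show "card (S.Phi ` D) = card (carrier G)" using card_image[OF Phi_inj] cardG by simp
qed

lemma Phi_inv: "x \<in> carrier G \<Longrightarrow> inv_into D S.Phi x \<in> D \<and> S.Phi (inv_into D S.Phi x) = x"
  using Phi_surj by (metis f_inv_into_f inv_into_into)

lemma fix_id:
  assumes f: "f \<in> hom G G" and fg: "\<And>i. i < 2 * r \<Longrightarrow> f (g i) = g i" and fz: "f z = z"
    and x: "x \<in> carrier G"
  shows "f x = x"
proof -
  obtain p where p: "p \<in> D" "x = S.Phi p" using Phi_surj x by blast
  obtain K b where pK: "p = (K, b)" by (cases p)
  have K: "K \<subseteq> {..<2 * r}" using p pK by (auto simp: D_def)
  have fl: "finite K" using K finite_subset by blast
  have sl: "set (sorted_list_of_set K) \<subseteq> {..<2 * r}" using K fl by simp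
  have 1: "f (S.Psi K) = S.Psi K"
    unfolding S.Psi_def using S.wp_hom[OF f sl, of g] fg sl by (auto simp: S.wp_def)
  have 2: "f (S.zp b) = S.zp b" using fz f by (auto simp: S.zp_def hom_one)
  have "f x = f (S.zp b) \<otimes> f (S.Psi K)"
    using p pK f S.Psi_carr[OF K] by (simp add: S.Phi_def hom_mult)
  then show ?thesis using 1 2 p pK by (simp add: S.Phi_def)
qed

lemma endo:
  assumes sr: "\<And>i. i < 2 * r \<Longrightarrow> \<sigma> i < 2 * r" and si: "inj_on \<sigma> {..<2 * r}"
  shows "\<exists>\<alpha>. \<alpha> \<in> hom G G \<and> (\<forall>i<2 * r. \<alpha> (g i) = g (\<sigma> i)) \<and> \<alpha> z = z"
proof -
  interpret T: sbasis G z "g \<circ> \<sigma>" "2 * r"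
  proof unfold_locales
    show "z \<in> carrier G" by (rule z_carr)
    show "\<And>x. x \<in> carrier G \<Longrightarrow> z \<otimes> x = x \<otimes> z" by (rule z_cent)
    show "z \<otimes> z = \<one>" by (rule zz)
    show "\<And>i. i < 2 * r \<Longrightarrow> (g \<circ> \<sigma>) i \<in> carrier G" using g_carr sr by simp
    show "\<And>i. i < 2 * r \<Longrightarrow> (g \<circ> \<sigma>) i \<otimes> (g \<circ> \<sigma>) i = \<one>" using g_sq sr by simp
    show "\<And>i j. i < 2 * r \<Longrightarrow> j < 2 * r \<Longrightarrow> i \<noteq> j \<Longrightarrow>
        (g \<circ> \<sigma>) i \<otimes> (g \<circ> \<sigma>) j = z \<otimes> ((g \<circ> \<sigma>) j \<otimes> (g \<circ> \<sigma>) i)"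
    proof -
      fix i j assume ij: "i < 2 * r" "j < 2 * r" "i \<noteq> j"
      then have "\<sigma> i \<noteq> \<sigma> j" using si by (auto simp: inj_on_def)
      then show "(g \<circ> \<sigma>) i \<otimes> (g \<circ> \<sigma>) j = z \<otimes> ((g \<circ> \<sigma>) j \<otimes> (g \<circ> \<sigma>) i)"
        using g_comm[OF sr[OF ij(1)] sr[OF ij(2)]] by simp
    qed
  qed
  define \<alpha> where "\<alpha> x = T.Phi (inv_into D S.Phi x)" for x
  have ev: "\<And>p. p \<in> D \<Longrightarrow> \<alpha> (S.Phi p) = T.Phi p"
    unfolding \<alpha>_def using Phi_inj by simp
  have hom: "\<alpha> \<in> hom G G"
  proof (rule homI)
    fix x assume "x \<in> carrier G"
    then have "inv_into D S.Phi x \<in> D" using Phi_inv by blast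
    then have "fst (inv_into D S.Phi x) \<subseteq> {..<2 * r}" by (auto simp: D_def mem_Times_iff)
    then show "\<alpha> x \<in> carrier G" unfolding \<alpha>_def by (rule T.Phi_carr)
  next
    fix x y assume x: "x \<in> carrier G" and y: "y \<in> carrier G"
    obtain p where p: "p \<in> D" "x = S.Phi p" using Phi_surj x by blast
    obtain q where q: "q \<in> D" "y = S.Phi q" using Phi_surj y by blast
    have pD: "fst p \<subseteq> {..<2 * r}" "fst q \<subseteq> {..<2 * r}" using p q by (auto simp: D_def)
    have "x \<otimes> y = S.Phi (mulD p q)" using p q S.Phi_mult pD by simp
    then have "\<alpha> (x \<otimes> y) = T.Phi (mulD p q)" using ev mulD_D p q by simp
    also have "\<dots> = T.Phi p \<otimes> T.Phi q" using T.Phi_mult pD by simp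
    finally show "\<alpha> (x \<otimes> y) = \<alpha> x \<otimes> \<alpha> y" using ev p q by simp
  qed
  have "\<forall>i<2 * r. \<alpha> (g i) = g (\<sigma> i)"
  proof (intro allI impI)
    fix i assume i: "i < 2 * r"
    have "({i}, False) \<in> D" using i by (simp add: D_def)
    then show "\<alpha> (g i) = g (\<sigma> i)" using ev[of "({i}, False)"] S.Phi_single[OF i] T.Phi_single[OF i] by simp
  qed
  moreover have "\<alpha> z = z"
  proof -
    have "({}, True) \<in> D" by (simp add: D_def)
    then show ?thesis using ev[of "({}, True)"] S.Phi_z T.Phi_z by simp
  qed
  ultimately show ?thesis using hom by blast
qed

lemma perm_aut:
  assumes sb: "bij_betw \<sigma> {..<2 * r} {..<2 * r}"
  shows "\<exists>\<alpha>. \<alpha> \<in> hom G G \<and> bij_betw \<alpha> (carrier G) (carrier G) \<and> (\<forall>i<2 * r. \<alpha> (g i) = g (\<sigma> i))"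
proof -
  define \<tau> where "\<tau> = inv_into {..<2 * r} \<sigma>"
  have sr: "\<And>i. i < 2 * r \<Longrightarrow> \<sigma> i < 2 * r" using sb bij_betwE by blast
  have si: "inj_on \<sigma> {..<2 * r}" using sb bij_betw_imp_inj_on by blast
  have tb: "bij_betw \<tau> {..<2 * r} {..<2 * r}" using sb \<tau>_def bij_betw_inv_into by blast
  have tr: "\<And>i. i < 2 * r \<Longrightarrow> \<tau> i < 2 * r" using tb bij_betwE by blast
  have ti: "inj_on \<tau> {..<2 * r}" using tb bij_betw_imp_inj_on by blast
  have ts: "\<And>i. i < 2 * r \<Longrightarrow> \<tau> (\<sigma> i) = i" using si \<tau>_def by simp
  have st: "\<And>i. i < 2 * r \<Longrightarrow> \<sigma> (\<tau> i) = i" using sb \<tau>_def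
    by (meson bij_betw_inv_into_right lessThan_iff)
  obtain \<alpha> where a: "\<alpha> \<in> hom G G" "\<forall>i<2 * r. \<alpha> (g i) = g (\<sigma> i)" "\<alpha> z = z"
    using endo[OF sr si] by blast
  obtain \<beta> where b: "\<beta> \<in> hom G G" "\<forall>i<2 * r. \<beta> (g i) = g (\<tau> i)" "\<beta> z = z"
    using endo[OF tr ti] by blast
  have ba: "\<And>x. x \<in> carrier G \<Longrightarrow> \<beta> (\<alpha> x) = x"
  proof -
    fix x assume x: "x \<in> carrier G"
    have "(\<beta> \<circ> \<alpha>) x = x"
      using fix_id[of "\<beta> \<circ> \<alpha>" x] Group.hom_compose[OF a(1) b(1)] a b sr ts x by auto
    then show "\<beta> (\<alpha> x) = x" by simp
  qed
  have ab: "\<And>x. x \<in> carrier G \<Longrightarrow> \<alpha> (\<beta> x) = x"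
  proof -
    fix x assume x: "x \<in> carrier G"
    have "(\<alpha> \<circ> \<beta>) x = x"
      using fix_id[of "\<alpha> \<circ> \<beta>" x] Group.hom_compose[OF b(1) a(1)] a b tr st x by auto
    then show "\<alpha> (\<beta> x) = x" by simp
  qed
  have "bij_betw \<alpha> (carrier G) (carrier G)"
    by (rule bij_betwI[where g=\<beta>]) (use a(1) b(1) ba ab in \<open>auto simp: hom_def\<close>)
  then show ?thesis using a by blast
qed

abbreviation "Gam \<equiv> cayley_graph G (g ` {..<2 * r})"

lemma edge: "u \<in> carrier G \<Longrightarrow> v \<in> carrier G \<Longrightarrow>
    {u, v} \<in> edges Gam \<longleftrightarrow> (\<exists>i<2 * r. v = g i \<otimes> u)"
  using cay_edge[OF is_monoid, of "g ` {..<2 * r}" u v] g_carr g_sq by auto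

lemma R_aut: "c \<in> carrier G \<Longrightarrow> (\<lambda>x. x \<otimes> c) \<in> graph_aut Gam"
  unfolding graph_aut_def
proof (intro CollectI conjI ballI)
  assume c: "c \<in> carrier G"
  show "bij_betw (\<lambda>x. x \<otimes> c) (verts Gam) (verts Gam)"
    by (rule bij_betwI[where g="\<lambda>x. x \<otimes> inv c"]) (use c in \<open>auto simp: m_assoc\<close>)
  fix u v assume u: "u \<in> verts Gam" and v: "v \<in> verts Gam"
  then have u': "u \<in> carrier G" and v': "v \<in> carrier G" by auto
  have "(\<exists>i<2 * r. v = g i \<otimes> u) \<longleftrightarrow> (\<exists>i<2 * r. v \<otimes> c = g i \<otimes> (u \<otimes> c))"
    using u' v' c g_carr by (auto simp: m_assoc[symmetric])
  then show "({u, v} \<in> edges Gam) = ({u \<otimes> c, v \<otimes> c} \<in> edges Gam)"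
    using edge u' v' c by simp
qed

lemma hom_aut:
  assumes a: "\<alpha> \<in> hom G G" "bij_betw \<alpha> (carrier G) (carrier G)" "\<forall>i<2 * r. \<alpha> (g i) = g (\<sigma> i)"
    and sb: "bij_betw \<sigma> {..<2 * r} {..<2 * r}"
  shows "\<alpha> \<in> graph_aut Gam"
  unfolding graph_aut_def
proof (intro CollectI conjI ballI)
  show "bij_betw \<alpha> (verts Gam) (verts Gam)" using a by simp
  fix u v assume u: "u \<in> verts Gam" and v: "v \<in> verts Gam"
  then have u': "u \<in> carrier G" and v': "v \<in> carrier G" by auto
  have au: "\<alpha> u \<in> carrier G" and av: "\<alpha> v \<in> carrier G" using a u' v' by (auto simp: hom_def)
  have inj: "inj_on \<alpha> (carrier G)" using a bij_betw_imp_inj_on by blast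
  have "(\<exists>i<2 * r. v = g i \<otimes> u) \<longleftrightarrow> (\<exists>i<2 * r. \<alpha> v = g i \<otimes> \<alpha> u)"
  proof
    assume "\<exists>i<2 * r. v = g i \<otimes> u"
    then obtain i where i: "i < 2 * r" "v = g i \<otimes> u" by blast
    then have "\<alpha> v = g (\<sigma> i) \<otimes> \<alpha> u" using a g_carr u' by (simp add: hom_mult)
    moreover have "\<sigma> i < 2 * r" using sb i bij_betwE by blast
    ultimately show "\<exists>i<2 * r. \<alpha> v = g i \<otimes> \<alpha> u" by blast
  next
    assume "\<exists>i<2 * r. \<alpha> v = g i \<otimes> \<alpha> u"
    then obtain j where j: "j < 2 * r" "\<alpha> v = g j \<otimes> \<alpha> u" by blast
    obtain i where i: "i < 2 * r" "\<sigma> i = j" using sb j(1) by (metis bij_betw_iff_bijections lessThan_iff)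
    have "\<alpha> (g i \<otimes> u) = \<alpha> v" using i j a g_carr u' by (simp add: hom_mult)
    then have "g i \<otimes> u = v" using inj u' v' g_carr i by (simp add: inj_on_def)
    then show "\<exists>i<2 * r. v = g i \<otimes> u" using i by blast
  qed
  then show "({u, v} \<in> edges Gam) = ({\<alpha> u, \<alpha> v} \<in> edges Gam)"
    using edge u' v' au av by simp
qed

lemma two_arc: "two_arc_transitive Gam"
  unfolding two_arc_transitive_def
proof (clarify)
  fix u v w u' v' w'
  assume t1: "(u, v, w) \<in> two_arcs Gam" and t2: "(u', v', w') \<in> two_arcs Gam"
  have c: "u \<in> carrier G" "v \<in> carrier G" "w \<in> carrier G" "u' \<in> carrier G" "v' \<in> carrier G" "w' \<in> carrier G"
    using t1 t2 by (auto simp: two_arcs_def)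
  have e: "{v, u} \<in> edges Gam" "{v, w} \<in> edges Gam" "{v', u'} \<in> edges Gam" "{v', w'} \<in> edges Gam"
    using t1 t2 by (auto simp: two_arcs_def insert_commute)
  have ne: "u \<noteq> w" "u' \<noteq> w'" using t1 t2 by (auto simp: two_arcs_def)
  obtain a where a: "a < 2 * r" "u = g a \<otimes> v" using edge c e by blast
  obtain b where b: "b < 2 * r" "w = g b \<otimes> v" using edge c e by blast
  obtain a' where a': "a' < 2 * r" "u' = g a' \<otimes> v'" using edge c e by blast
  obtain b' where b': "b' < 2 * r" "w' = g b' \<otimes> v'" using edge c e by blast
  have ab: "a \<noteq> b" using a b ne by auto
  have ab': "a' \<noteq> b'" using a' b' ne by auto
  obtain \<sigma> where s: "bij_betw \<sigma> {..<2 * r} {..<2 * r}" "\<sigma> a = a'" "\<sigma> b = b'"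
    using perm2[OF a(1) b(1) ab a'(1) b'(1) ab'] by blast
  obtain \<alpha> where al: "\<alpha> \<in> hom G G" "bij_betw \<alpha> (carrier G) (carrier G)" "\<forall>i<2 * r. \<alpha> (g i) = g (\<sigma> i)"
    using perm_aut[OF s(1)] by blast
  define f where "f = ((\<lambda>x. x \<otimes> v') \<circ> \<alpha>) \<circ> (\<lambda>x. x \<otimes> inv v)"
  have fa: "f \<in> graph_aut Gam"
    unfolding f_def using aut_comp[OF aut_comp[OF R_aut hom_aut[OF al s(1)]] R_aut] c by simp
  have a1: "\<alpha> \<one> = \<one>" using hom_one[OF al(1) is_group is_group] by simp
  have fv: "f v = v'" using c a1 by (simp add: f_def)
  have gen: "\<And>i. i < 2 * r \<Longrightarrow> f (g i \<otimes> v) = g (\<sigma> i) \<otimes> v'"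
    using c al g_carr by (simp add: f_def m_assoc)
  show "\<exists>f\<in>graph_aut Gam. f u = u' \<and> f v = v' \<and> f w = w'"
    using fa fv gen[OF a(1)] gen[OF b(1)] a b a' b' s by auto
qed

lemma valG: "regular_of_valency Gam (2 * r)"
  unfolding regular_of_valency_def
proof
  fix x assume "x \<in> verts Gam"
  then have x: "x \<in> carrier G" by simp
  have "neighbours Gam x = (\<lambda>i. g i \<otimes> x) ` {..<2 * r}"
    unfolding neighbours_def using edge x g_carr by auto
  moreover have "inj_on (\<lambda>i. g i \<otimes> x) {..<2 * r}"
  proof (rule inj_onI)
    fix i j assume i: "i \<in> {..<2 * r}" and j: "j \<in> {..<2 * r}" and e: "g i \<otimes> x = g j \<otimes> x"
    then have "g i = g j" using x g_carr by simp
    then have "S.Phi ({i}, False) = S.Phi ({j}, False)" using S.Phi_single i j by simp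
    then have "({i}, False) = ({j}, False)" using Phi_inj i j by (auto simp: D_def inj_on_def)
    then show "i = j" by simp
  qed
  ultimately show "card (neighbours Gam x) = 2 * r" by (simp add: card_image)
qed

abbreviation "NQ \<equiv> normal_quotient Gam (right_mult_perms G Z)"
abbreviation "Sb \<equiv> (\<lambda>i. Z #> g i) ` {..<2 * r}"

lemma rcZ: "x \<in> carrier G \<Longrightarrow> Z #> x = {x, z \<otimes> x}"
  by (auto simp: r_coset_def)

lemma orbit: "x \<in> carrier G \<Longrightarrow> (\<lambda>f. f x) ` right_mult_perms G Z = Z #> x"
proof -
  assume x: "x \<in> carrier G"
  have "right_mult_perms G Z = {(\<lambda>y. y \<otimes> \<one>), (\<lambda>y. y \<otimes> z)}" by (auto simp: right_mult_perms_def)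
  then have "(\<lambda>f. f x) ` right_mult_perms G Z = {x \<otimes> \<one>, x \<otimes> z}" by simp
  also have "\<dots> = {x, z \<otimes> x}" using x z_cent[OF x] by simp
  finally show ?thesis using rcZ[OF x] by simp
qed

lemma NQ_verts: "verts NQ = carrier (G Mod Z)"
proof -
  have "verts NQ = orbits (right_mult_perms G Z) (carrier G)" by (simp add: normal_quotient_def verts_def cayley_graph_def)
  also have "\<dots> = {Z #> x | x. x \<in> carrier G}"
    unfolding orbits_def by (intro Collect_cong) (metis orbit)
  also have "\<dots> = carrier (G Mod Z)" by (auto simp: carrier_FactGroup)
  finally show ?thesis .
qed

lemma rmp_aut: "right_mult_perms G Z \<subseteq> graph_aut Gam"
  using R_aut z_carr by (auto simp: right_mult_perms_def)

lemma cosetE: "B \<in> carrier (G Mod Z) \<Longrightarrow> \<exists>x\<in>carrier G. B = Z #> x"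
  by (auto simp: carrier_FactGroup)

lemma NQ_edge: "B \<in> carrier (G Mod Z) \<Longrightarrow> C \<in> carrier (G Mod Z) \<Longrightarrow>
   {B, C} \<in> edges NQ \<longleftrightarrow> (\<exists>u\<in>B. \<exists>v\<in>C. {u, v} \<in> edges Gam)"
proof
  assume B: "B \<in> carrier (G Mod Z)" and C: "C \<in> carrier (G Mod Z)" and "{B, C} \<in> edges NQ"
  then obtain B' C' where bc: "{B, C} = {B', C'}" "\<exists>u\<in>B'. \<exists>v\<in>C'. {u, v} \<in> edges Gam"
    by (auto simp: normal_quotient_def edges_def)
  then have "(B = B' \<and> C = C') \<or> (B = C' \<and> C = B')" by (simp add: doubleton_eq_iff)
  then show "\<exists>u\<in>B. \<exists>v\<in>C. {u, v} \<in> edges Gam"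
  proof
    assume "B = B' \<and> C = C'" then show ?thesis using bc(2) by blast
  next
    assume "B = C' \<and> C = B'" then show ?thesis using bc(2) by (metis insert_commute)
  qed
next
  assume B: "B \<in> carrier (G Mod Z)" and C: "C \<in> carrier (G Mod Z)"
    and "\<exists>u\<in>B. \<exists>v\<in>C. {u, v} \<in> edges Gam"
  moreover have "orbits (right_mult_perms G Z) (verts Gam) = carrier (G Mod Z)"
    using NQ_verts by (simp add: normal_quotient_def verts_def cayley_graph_def)
  ultimately show "{B, C} \<in> edges NQ" by (auto simp: normal_quotient_def edges_def)
qed

lemma Sb_carr: "Sb \<subseteq> carrier (G Mod Z)"
  using rcosetsI[of Z] z_carr g_carr by (auto simp: FactGroup_def)

lemma Q_edge: "B \<in> carrier (G Mod Z) \<Longrightarrow> C \<in> carrier (G Mod Z) \<Longrightarrow>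
   {B, C} \<in> edges (cayley_graph (G Mod Z) Sb) \<longleftrightarrow> (\<exists>i<2 * r. C = (Z #> g i) <#> B)"
proof -
  assume B: "B \<in> carrier (G Mod Z)" and C: "C \<in> carrier (G Mod Z)"
  have inv: "\<And>t. t \<in> Sb \<Longrightarrow> t \<otimes>\<^bsub>G Mod Z\<^esub> t = \<one>\<^bsub>G Mod Z\<^esub>"
  proof -
    fix t assume "t \<in> Sb"
    then obtain i where i: "i < 2 * r" "t = Z #> g i" by auto
    have "t <#> t = Z #> (g i \<otimes> g i)" using i normal.rcos_sum[OF Znormal] g_carr by simp
    also have "\<dots> = Z" using g_sq i subgroup.rcos_const[OF Zsub is_group, of "\<one>"] by simp
    finally show "t \<otimes>\<^bsub>G Mod Z\<^esub> t = \<one>\<^bsub>G Mod Z\<^esub>" by simp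
  qed
  show ?thesis
    using cay_edge[OF group.is_monoid[OF FG] Sb_carr inv B C] by auto
qed

lemma edge_match: "B \<in> carrier (G Mod Z) \<Longrightarrow> C \<in> carrier (G Mod Z) \<Longrightarrow>
   (\<exists>u\<in>B. \<exists>v\<in>C. {u, v} \<in> edges Gam) \<longleftrightarrow> (\<exists>i<2 * r. C = (Z #> g i) <#> B)"
proof
  assume B: "B \<in> carrier (G Mod Z)" and C: "C \<in> carrier (G Mod Z)"
    and "\<exists>u\<in>B. \<exists>v\<in>C. {u, v} \<in> edges Gam"
  then obtain u v where uv: "u \<in> B" "v \<in> C" "{u, v} \<in> edges Gam" by blast
  obtain x where x: "x \<in> carrier G" "B = Z #> x" using cosetE[OF B] by blast
  obtain y where y: "y \<in> carrier G" "C = Z #> y" using cosetE[OF C] by blast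
  have u: "u \<in> carrier G" using uv x rcZ z_carr by auto
  have v: "v \<in> carrier G" using uv y rcZ z_carr by auto
  obtain i where i: "i < 2 * r" "v = g i \<otimes> u" using edge[OF u v] uv by blast
  have Bu: "B = Z #> u" using repr_independence[OF _ x(1) Zsub] uv x by simp
  have Cv: "C = Z #> v" using repr_independence[OF _ y(1) Zsub] uv y by simp
  have "(Z #> g i) <#> B = Z #> v" using Bu i normal.rcos_sum[OF Znormal] g_carr u by simp
  then show "\<exists>i<2 * r. C = (Z #> g i) <#> B" using Cv i by auto
next
  assume B: "B \<in> carrier (G Mod Z)" and C: "C \<in> carrier (G Mod Z)"
    and "\<exists>i<2 * r. C = (Z #> g i) <#> B"
  then obtain i where i: "i < 2 * r" "C = (Z #> g i) <#> B" by blast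
  obtain x where x: "x \<in> carrier G" "B = Z #> x" using cosetE[OF B] by blast
  have C': "C = Z #> (g i \<otimes> x)" using i x normal.rcos_sum[OF Znormal] g_carr by simp
  have "x \<in> B" using x rcos_self[OF x(1) Zsub] by simp
  moreover have "g i \<otimes> x \<in> C" using C' rcos_self[OF _ Zsub] g_carr i x by simp
  moreover have "{x, g i \<otimes> x} \<in> edges Gam" using edge g_carr i x by auto
  ultimately show "\<exists>u\<in>B. \<exists>v\<in>C. {u, v} \<in> edges Gam" by blast
qed

lemma iso_Q: "graph_iso NQ (cayley_graph (G Mod Z) Sb)"
  unfolding graph_iso_def
proof (intro exI[of _ id] conjI ballI)
  show "bij_betw id (verts NQ) (verts (cayley_graph (G Mod Z) Sb))" using NQ_verts by simp
  fix u v assume "u \<in> verts NQ" "v \<in> verts NQ"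
  then show "({u, v} \<in> edges NQ) = ({id u, id v} \<in> edges (cayley_graph (G Mod Z) Sb))"
    using NQ_verts NQ_edge edge_match Q_edge by simp
qed

lemma valQ: "regular_of_valency NQ (2 * r)"
  unfolding regular_of_valency_def
proof
  fix B assume "B \<in> verts NQ"
  then have B: "B \<in> carrier (G Mod Z)" using NQ_verts by simp
  obtain x where x: "x \<in> carrier G" "B = Z #> x" using cosetE[OF B] by blast
  have "neighbours NQ B = {C \<in> carrier (G Mod Z). \<exists>i<2 * r. C = (Z #> g i) <#> B}"
    unfolding neighbours_def using NQ_verts NQ_edge[OF B] edge_match[OF B] by auto
  also have "\<dots> = (\<lambda>i. Z #> (g i \<otimes> x)) ` {..<2 * r}"
  proof -
    have "\<And>i. i < 2 * r \<Longrightarrow> (Z #> g i) <#> B = Z #> (g i \<otimes> x)"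
      using x normal.rcos_sum[OF Znormal] g_carr by simp
    moreover have "\<And>i. i < 2 * r \<Longrightarrow> Z #> (g i \<otimes> x) \<in> carrier (G Mod Z)"
      using rcosetsI[of Z] z_carr g_carr x by (auto simp: FactGroup_def)
    ultimately show ?thesis by auto
  qed
  finally have nb: "neighbours NQ B = (\<lambda>i. Z #> (g i \<otimes> x)) ` {..<2 * r}" .
  have "inj_on (\<lambda>i. Z #> (g i \<otimes> x)) {..<2 * r}"
  proof (rule inj_onI)
    fix i j assume i: "i \<in> {..<2 * r}" and j: "j \<in> {..<2 * r}" and e: "Z #> (g i \<otimes> x) = Z #> (g j \<otimes> x)"
    have gi: "g i \<in> carrier G" and gj: "g j \<in> carrier G" using i j g_carr by auto
    have "g i \<otimes> x \<in> Z #> (g j \<otimes> x)" using e rcos_self[OF _ Zsub] gi x by (metis m_closed)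
    then have "g i \<otimes> x = g j \<otimes> x \<or> g i \<otimes> x = z \<otimes> (g j \<otimes> x)" using rcZ gj x by simp
    then have "g i = g j \<or> g i = z \<otimes> g j" using gi gj x z_carr by (auto simp: m_assoc[symmetric])
    moreover have "S.Phi ({j}, True) = z \<otimes> g j" using j gj by (simp add: S.Phi_def S.zp_def S.Psi_single)
    ultimately have "S.Phi ({i}, False) = S.Phi ({j}, False) \<or> S.Phi ({i}, False) = S.Phi ({j}, True)"
      using S.Phi_single i j by auto
    then have "({i}, False) = ({j}, False) \<or> ({i}, False) = ({j}, True)"
      using Phi_inj i j by (auto simp: D_def inj_on_def)
    then show "i = j" by auto
  qed
  then show "card (neighbours NQ B) = 2 * r" using nb by (simp add: card_image)
qed

end


theorem theorem4p3:
  fixes G :: "('a, 'b) monoid_scheme" and r :: nat and z :: 'a and g :: "nat \<Rightarrow> 'a"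
  assumes "group G"
    and "r \<ge> 1"
    and "finite (carrier G)"
    and "card (carrier G) = 2 ^ (2 * r + 1)"
    and "group_center G = {\<one>\<^bsub>G\<^esub>, z}" and "z \<noteq> \<one>\<^bsub>G\<^esub>"
    and "G Mod (group_center G) \<cong> product_group {..<2 * r} (\<lambda>_. integer_mod_group 2)"
    and "\<And>i. i < 2 * r \<Longrightarrow> g i \<in> carrier G"
    \<comment> \<open>Z g_1, ..., Z g_2r is a basis of G/Z (spanning and linearly independent)\<close>
    and "generate (G Mod (group_center G)) ((\<lambda>i. group_center G #>\<^bsub>G\<^esub> g i) ` {..<2 * r})
           = carrier (G Mod (group_center G))"
    and "\<And>I. I \<subseteq> {..<2 * r} \<Longrightarrow>
           finprod (G Mod (group_center G)) (\<lambda>i. group_center G #>\<^bsub>G\<^esub> g i) I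
             = \<one>\<^bsub>G Mod (group_center G)\<^esub> \<Longrightarrow> I = {}"
    \<comment> \<open>symmetric basis: Q(Z g_i) = g_i^2 = 1, B(Z g_i, Z g_j) = [g_i, g_j] = z for i \<noteq> j\<close>
    and "\<And>i. i < 2 * r \<Longrightarrow> g i \<otimes>\<^bsub>G\<^esub> g i = \<one>\<^bsub>G\<^esub>"
    and "\<And>i j. i < 2 * r \<Longrightarrow> j < 2 * r \<Longrightarrow> i \<noteq> j \<Longrightarrow> commutator G (g i) (g j) = z"
  shows "two_arc_transitive (cayley_graph G (g ` {..<2 * r}))
    \<and> right_mult_perms G (group_center G) \<subseteq> graph_aut (cayley_graph G (g ` {..<2 * r}))
    \<and> graph_iso
        (normal_quotient (cayley_graph G (g ` {..<2 * r})) (right_mult_perms G (group_center G)))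
        (cayley_graph (G Mod (group_center G))
           ((\<lambda>i. group_center G #>\<^bsub>G\<^esub> g i) ` {..<2 * r}))
    \<and> regular_of_valency (cayley_graph G (g ` {..<2 * r})) (2 * r)
    \<and> regular_of_valency
        (normal_quotient (cayley_graph G (g ` {..<2 * r})) (right_mult_perms G (group_center G)))
        (2 * r)"
proof -
  have c: "ctx G r z g"
    by (rule ctx.intro[OF assms(1)], rule ctx_axioms.intro) (fact assms)+
  interpret ctx G r z g by (fact c)
  show ?thesis using two_arc rmp_aut iso_Q valG valQ cent by simp
qed

end
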